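(* Let $n\ge1$, $m\ge0$ and let $v,u$ be vertices of $Y_{n,m}$. Then $v-u$ is a vertex of $Z_{n,m}$ and $d_{Y_{n,m}}(v,u)=d_{Z_{n,m}}(v-u,0)$.
   Context: The Yoke graph $Y_{n,m}$ has vertices the tuples $v=(v_0,\dots,v_{m+1})$ with $v_0,v_{m+1}\in\mathbb{Z}_n$, $v_1,\dots,v_m\in\{0,1\}$, $\sum v_i\equiv0\pmod n$; the dYoke graph $Z_{n,m}$ is defined identically but with $v_1,\dots,v_m\in\{-1,0,1\}$. In both, $u\sim v$ iff there is $0\le i\le m$ with $u_j=v_j$ for $j\notin\{i,i+1\}$ and either ($u_i=v_i+1$, $u_{i+1}=v_{i+1}-1$) or ($u_i=v_i-1$, $u_{i+1}=v_{i+1}+1$), bucket entries computed mod $n$. The difference $v-u$ is taken entrywise (buckets mod $n$), and $0$ is the all-zero vertex. *)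

theory Defs
  imports Main "HOL-Library.Extended_Nat"
begin

text \<open>A vertex is a function v :: nat => int with positions 0..m+1; positions beyond
  m+1 are fixed to 0. Positions 0 and m+1 are buckets in Z_n, represented by the
  canonical residues 0..n-1. Middle entries range over the set S
  ({0,1} for the Yoke graph, {-1,0,1} for the dYoke graph).\<close>

definition is_bucket :: "nat \<Rightarrow> nat \<Rightarrow> bool" where
  "is_bucket m j \<longleftrightarrow> j = 0 \<or> j = m + 1"

definition gvert :: "int set \<Rightarrow> nat \<Rightarrow> nat \<Rightarrow> (nat \<Rightarrow> int) set" where
  "gvert S n m = {v. (\<forall>j. j > m + 1 \<longrightarrow> v j = 0)
      \<and> v 0 \<in> {0..<int n} \<and> v (m + 1) \<in> {0..<int n}
      \<and> (\<forall>j. 1 \<le> j \<and> j \<le> m \<longrightarrow> v j \<in> S)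
      \<and> (\<Sum>j\<le>m+1. v j) mod int n = 0}"

definition Yvert :: "nat \<Rightarrow> nat \<Rightarrow> (nat \<Rightarrow> int) set" where
  "Yvert n m = gvert {0, 1} n m"

definition Zvert :: "nat \<Rightarrow> nat \<Rightarrow> (nat \<Rightarrow> int) set" where
  "Zvert n m = gvert {-1, 0, 1} n m"

definition eqpos :: "nat \<Rightarrow> nat \<Rightarrow> nat \<Rightarrow> int \<Rightarrow> int \<Rightarrow> bool" where
  "eqpos n m j a b \<longleftrightarrow> (if is_bucket m j then a mod int n = b mod int n else a = b)"

definition gadj :: "int set \<Rightarrow> nat \<Rightarrow> nat \<Rightarrow> (nat \<Rightarrow> int) \<Rightarrow> (nat \<Rightarrow> int) \<Rightarrow> bool" where
  "gadj S n m u v \<longleftrightarrow> u \<in> gvert S n m \<and> v \<in> gvert S n m \<and>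
     (\<exists>i\<le>m. (\<forall>j\<le>m+1. j \<noteq> i \<and> j \<noteq> Suc i \<longrightarrow> u j = v j) \<and>
        ((eqpos n m i (u i) (v i + 1) \<and> eqpos n m (Suc i) (u (Suc i)) (v (Suc i) - 1)) \<or>
         (eqpos n m i (u i) (v i - 1) \<and> eqpos n m (Suc i) (u (Suc i)) (v (Suc i) + 1))))"

definition gdist :: "int set \<Rightarrow> nat \<Rightarrow> nat \<Rightarrow> (nat \<Rightarrow> int) \<Rightarrow> (nat \<Rightarrow> int) \<Rightarrow> enat" where
  "gdist S n m x y = (INF k \<in> {k. \<exists>p :: nat \<Rightarrow> nat \<Rightarrow> int.
       p 0 = x \<and> p k = y \<and> x \<in> gvert S n m \<and> y \<in> gvert S n m \<and>
       (\<forall>i<k. gadj S n m (p i) (p (Suc i)))}. enat k)"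

definition distY :: "nat \<Rightarrow> nat \<Rightarrow> (nat \<Rightarrow> int) \<Rightarrow> (nat \<Rightarrow> int) \<Rightarrow> enat" where
  "distY n m = gdist {0, 1} n m"

definition distZ :: "nat \<Rightarrow> nat \<Rightarrow> (nat \<Rightarrow> int) \<Rightarrow> (nat \<Rightarrow> int) \<Rightarrow> enat" where
  "distZ n m = gdist {-1, 0, 1} n m"

definition vdiff :: "nat \<Rightarrow> nat \<Rightarrow> (nat \<Rightarrow> int) \<Rightarrow> (nat \<Rightarrow> int) \<Rightarrow> (nat \<Rightarrow> int)" where
  "vdiff n m v u = (\<lambda>j. if is_bucket m j then (v j - u j) mod int n
                        else if j \<le> m then v j - u j else 0)"

definition zerov :: "nat \<Rightarrow> int" where
  "zerov = (\<lambda>_. 0)"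

end

theory Submission
  imports Defs
begin

definition pfx :: "(nat \<Rightarrow> int) \<Rightarrow> nat \<Rightarrow> int" where
  "pfx w j = (\<Sum>l\<le>j. w l)"

definition cst :: "nat \<Rightarrow> nat \<Rightarrow> (nat \<Rightarrow> int) \<Rightarrow> int \<Rightarrow> int" where
  "cst n m w k = (\<Sum>j\<le>m. \<bar>pfx w j - k * int n\<bar>)"

lemma pfx_0[simp]: "pfx w 0 = w 0" by (simp add: pfx_def)
lemma pfx_Suc: "pfx w (Suc j) = pfx w j + w (Suc j)" by (simp add: pfx_def)

lemma pfx_diff:
  assumes "i \<le> m"
    and "a 0 = b 0 + (if i = 0 then e + c * int n else 0)"
    and "\<And>l. 1 \<le> l \<Longrightarrow> l \<le> m \<Longrightarrow> a l = b l + (if l = i then e else if l = Suc i then -e else 0)"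
  shows "j \<le> m \<Longrightarrow> pfx a j = pfx b j + (if i = 0 then c * int n else 0) + (if j = i then e else 0)"
proof (induction j)
  case 0
  then show ?case using assms(2) by simp
next
  case (Suc j)
  then have "pfx a j = pfx b j + (if i = 0 then c * int n else 0) + (if j = i then e else 0)" by simp
  moreover have "a (Suc j) = b (Suc j) + (if Suc j = i then e else if Suc j = Suc i then -e else 0)"
    using assms(3)[of "Suc j"] Suc.prems by simp
  ultimately show ?case by (auto simp: pfx_Suc)
qed

lemma cst_le:
  assumes "\<And>j. j \<le> m \<Longrightarrow> pfx a j = pfx b j + C * int n + (if j = i then e else 0)"
    and "\<bar>e\<bar> \<le> 1"
  shows "cst n m a (k + C) \<le> cst n m b k + 1"
proof -
  have "cst n m a (k + C) = (\<Sum>j\<le>m. \<bar>pfx b j - k * int n + (if j = i then e else 0)\<bar>)"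
    unfolding cst_def by (rule sum.cong) (auto simp: assms(1) algebra_simps)
  also have "\<dots> \<le> (\<Sum>j\<le>m. \<bar>pfx b j - k * int n\<bar> + (if j = i then 1 else 0))"
    by (rule sum_mono) (use assms(2) in auto)
  also have "\<dots> \<le> cst n m b k + 1"
    by (simp add: sum.distrib cst_def)
  finally show ?thesis .
qed

lemma cst_eq:
  assumes "\<And>j. j \<le> m \<Longrightarrow> pfx a j = pfx b j + C * int n + (if j = i then - d else 0)"
    and "d = 1 \<or> d = -1" and "(pfx b i - k * int n) * d > 0" and "i \<le> m"
  shows "cst n m a (k + C) = cst n m b k - 1"
proof -
  have "cst n m a (k + C) = (\<Sum>j\<le>m. \<bar>pfx b j - k * int n\<bar> - (if j = i then 1 else 0))"
    unfolding cst_def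
  proof (rule sum.cong)
    fix j assume "j \<in> {..m}"
    then show "\<bar>pfx a j - (k + C) * int n\<bar> = \<bar>pfx b j - k * int n\<bar> - (if j = i then 1 else 0)"
      using assms(1)[of j] assms(2,3) by (cases "j = i") (auto simp: algebra_simps abs_if mult_less_0_iff zero_less_mult_iff)
  qed simp
  also have "\<dots> = cst n m b k - 1"
    using assms(4) by (simp add: sum_subtractf cst_def)
  finally show ?thesis .
qed

lemma modeq_ex: "a mod int n = b mod int n \<Longrightarrow> \<exists>c. a = b + c * int n"
proof -
  assume "a mod int n = b mod int n"
  then have "int n dvd (a - b)" by (simp add: mod_eq_dvd_iff)
  then obtain c where "a - b = int n * c" by (elim dvdE)
  then show ?thesis by (intro exI[of _ c]) (simp add: algebra_simps)
qed

lemma zstep: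
  assumes "gadj S n m w w'"
  shows "\<exists>k. cst n m w k \<le> cst n m w' k' + 1"
proof -
  from assms obtain i where i: "i \<le> m"
    and eq: "\<forall>j\<le>m+1. j \<noteq> i \<and> j \<noteq> Suc i \<longrightarrow> w j = w' j"
    and dis: "(eqpos n m i (w i) (w' i + 1) \<and> eqpos n m (Suc i) (w (Suc i)) (w' (Suc i) - 1)) \<or>
         (eqpos n m i (w i) (w' i - 1) \<and> eqpos n m (Suc i) (w (Suc i)) (w' (Suc i) + 1))"
    unfolding gadj_def by blast
  from dis obtain e where e: "e = 1 \<or> e = -1" and
    E: "eqpos n m i (w i) (w' i + e)" "eqpos n m (Suc i) (w (Suc i)) (w' (Suc i) - e)"
  proof -
    from dis show ?thesis
    proof
      assume h: "eqpos n m i (w i) (w' i + 1) \<and> eqpos n m (Suc i) (w (Suc i)) (w' (Suc i) - 1)"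
      show ?thesis using that[of 1] h by simp
    next
      assume h: "eqpos n m i (w i) (w' i - 1) \<and> eqpos n m (Suc i) (w (Suc i)) (w' (Suc i) + 1)"
      show ?thesis using that[of "-1"] h by simp
    qed
  qed
  obtain c where c: "w 0 = w' 0 + (if i = 0 then e + c * int n else 0)"
  proof (cases "i = 0")
    case True
    then have "w 0 mod int n = (w' 0 + e) mod int n" using E(1) by (simp add: eqpos_def is_bucket_def)
    then obtain c where "w 0 = w' 0 + e + c * int n" using modeq_ex by blast
    then show ?thesis using that[of c] True by simp
  next
    case False
    then show ?thesis using that[of 0] eq by simp
  qed
  have mid: "w l = w' l + (if l = i then e else if l = Suc i then -e else 0)" if "1 \<le> l" "l \<le> m" for l
  proof -
    have nb: "\<not> is_bucket m l" using that by (simp add: is_bucket_def)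
    show ?thesis
    proof (cases "l = i")
      case True then show ?thesis using E(1) nb by (simp add: eqpos_def)
    next
      case False
      show ?thesis
      proof (cases "l = Suc i")
        case True then show ?thesis using E(2) nb False by (simp add: eqpos_def)
      next
        case False2: False
        have "w l = w' l" using eq that False False2 by auto
        then show ?thesis using False False2 by simp
      qed
    qed
  qed
  have "\<And>j. j \<le> m \<Longrightarrow> pfx w j = pfx w' j + (if i = 0 then c else 0) * int n + (if j = i then e else 0)"
    using pfx_diff[of i m w w' e c n, OF i c mid] by simp
  moreover have "\<bar>e\<bar> \<le> 1" using e by auto
  ultimately have "cst n m w (k' + (if i = 0 then c else 0)) \<le> cst n m w' k' + 1" by (rule cst_le)
  then show ?thesis by blast
qed

lemma zero_cst: "cst n m zerov 0 = 0"
  by (simp add: cst_def pfx_def zerov_def)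

lemma zpath:
  "\<forall>p. p 0 = w \<and> p len = zerov \<and> (\<forall>i<len. gadj S n m (p i) (p (Suc i))) \<longrightarrow> (\<exists>k. cst n m w k \<le> int len)"
proof (induction len arbitrary: w)
  case 0
  show ?case
  proof (intro allI impI)
    fix p assume "p 0 = w \<and> p 0 = zerov \<and> (\<forall>i<0. gadj S n m (p i) (p (Suc i)))"
    then have "w = zerov" by metis
    then show "\<exists>k. cst n m w k \<le> int 0" using zero_cst by (intro exI[of _ 0]) simp
  qed
next
  case (Suc len)
  show ?case
  proof (intro allI impI)
    fix p assume p: "p 0 = w \<and> p (Suc len) = zerov \<and> (\<forall>i<Suc len. gadj S n m (p i) (p (Suc i)))"
    have pp: "(\<lambda>i. p (Suc i)) 0 = p 1 \<and> (\<lambda>i. p (Suc i)) len = zerov \<and> (\<forall>i<len. gadj S n m ((\<lambda>i. p (Suc i)) i) ((\<lambda>i. p (Suc i)) (Suc i)))"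
      using p by simp
    have "\<exists>k. cst n m (p 1) k \<le> int len"
      by (rule Suc.IH[of "p 1", rule_format, OF pp])
    then obtain k' where k': "cst n m (p 1) k' \<le> int len" by blast
    have "gadj S n m (p 0) (p 1)" using p by auto
    then obtain k where "cst n m (p 0) k \<le> cst n m (p 1) k' + 1" using zstep[of S n m "p 0" "p 1" k'] by blast
    then have "cst n m w k \<le> int (Suc len)" using k' p by simp
    then show "\<exists>k. cst n m w k \<le> int (Suc len)" by blast
  qed
qed

lemma sum_mod_cong:
  assumes "\<And>j. j \<in> A \<Longrightarrow> f j mod (q::int) = g j mod q"
  shows "(\<Sum>j\<in>A. f j) mod q = (\<Sum>j\<in>A. g j) mod q"
proof -
  have "(\<Sum>j\<in>A. f j) mod q = (\<Sum>j\<in>A. f j mod q) mod q" by (simp add: mod_sum_eq)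
  also have "\<dots> = (\<Sum>j\<in>A. g j mod q) mod q" using assms by (simp cong: sum.cong)
  also have "\<dots> = (\<Sum>j\<in>A. g j) mod q" by (simp add: mod_sum_eq)
  finally show ?thesis .
qed

lemma vdiff_Z:
  assumes n: "n \<ge> 1" and v: "v \<in> Yvert n m" and u: "u \<in> Yvert n m"
  shows "vdiff n m v u \<in> Zvert n m"
proof -
  have np: "int n > 0" using n by simp
  have vv: "(\<forall>j. j > m + 1 \<longrightarrow> v j = 0) \<and> v 0 \<in> {0..<int n} \<and> v (m + 1) \<in> {0..<int n}
      \<and> (\<forall>j. 1 \<le> j \<and> j \<le> m \<longrightarrow> v j \<in> {0,1}) \<and> (\<Sum>j\<le>m+1. v j) mod int n = 0"
    using v by (simp add: Yvert_def gvert_def)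
  have uu: "(\<forall>j. j > m + 1 \<longrightarrow> u j = 0) \<and> u 0 \<in> {0..<int n} \<and> u (m + 1) \<in> {0..<int n}
      \<and> (\<forall>j. 1 \<le> j \<and> j \<le> m \<longrightarrow> u j \<in> {0,1}) \<and> (\<Sum>j\<le>m+1. u j) mod int n = 0"
    using u by (simp add: Yvert_def gvert_def)
  let ?w = "vdiff n m v u"
  have a: "\<forall>j. j > m + 1 \<longrightarrow> ?w j = 0" by (simp add: vdiff_def is_bucket_def)
  have b: "?w 0 \<in> {0..<int n}" "?w (m+1) \<in> {0..<int n}" using np by (simp_all add: vdiff_def is_bucket_def)
  have c: "\<forall>j. 1 \<le> j \<and> j \<le> m \<longrightarrow> ?w j \<in> {-1,0,1}"
  proof (intro allI impI)
    fix j assume j: "1 \<le> j \<and> j \<le> m"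
    then have "?w j = v j - u j" by (simp add: vdiff_def is_bucket_def)
    moreover have "v j \<in> {0,1}" "u j \<in> {0,1}" using vv uu j by auto
    ultimately show "?w j \<in> {-1,0,1}" by auto
  qed
  have "(\<Sum>j\<le>m+1. ?w j) mod int n = (\<Sum>j\<le>m+1. v j - u j) mod int n"
    by (rule sum_mod_cong) (auto simp: vdiff_def is_bucket_def)
  also have "\<dots> = ((\<Sum>j\<le>m+1. v j) - (\<Sum>j\<le>m+1. u j)) mod int n" by (simp add: sum_subtractf)
  also have "\<dots> = 0" using vv uu by (simp add: mod_diff_eq[symmetric])
  finally have d: "(\<Sum>j\<le>m+1. ?w j) mod int n = 0" .
  show ?thesis using a b c d by (simp add: Zvert_def gvert_def)
qed

lemma vdiff_self: "vdiff n m u u = zerov"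
  by (rule ext) (simp add: vdiff_def zerov_def)

lemma vdiff_adj:
  assumes n: "n \<ge> 1" and ab: "gadj {0,1} n m a b" and u: "u \<in> Yvert n m"
  shows "gadj {-1,0,1} n m (vdiff n m a u) (vdiff n m b u)"
proof -
  have aY: "a \<in> Yvert n m" and bY: "b \<in> Yvert n m" using ab by (simp_all add: gadj_def Yvert_def)
  from ab obtain i where i: "i \<le> m"
    and eq: "\<forall>j\<le>m+1. j \<noteq> i \<and> j \<noteq> Suc i \<longrightarrow> a j = b j"
    and dis: "(eqpos n m i (a i) (b i + 1) \<and> eqpos n m (Suc i) (a (Suc i)) (b (Suc i) - 1)) \<or>
         (eqpos n m i (a i) (b i - 1) \<and> eqpos n m (Suc i) (a (Suc i)) (b (Suc i) + 1))"
    unfolding gadj_def by blast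
  have key: "eqpos n m j (vdiff n m a u j) (vdiff n m b u j + e)" if "eqpos n m j (a j) (b j + e)" "j \<le> m + 1" for j e
  proof (cases "is_bucket m j")
    case True
    then have "a j mod int n = (b j + e) mod int n" using that by (simp add: eqpos_def)
    then have "(a j - u j) mod int n = (b j - u j + e) mod int n"
      by (metis add.commute add_diff_eq mod_diff_left_eq)
    then show ?thesis using True by (simp add: eqpos_def vdiff_def mod_simps)
  next
    case False
    then show ?thesis using that by (auto simp: eqpos_def vdiff_def is_bucket_def)
  qed
  have eq2: "\<forall>j\<le>m+1. j \<noteq> i \<and> j \<noteq> Suc i \<longrightarrow> vdiff n m a u j = vdiff n m b u j"
    using eq by (simp add: vdiff_def)
  have dis2: "(eqpos n m i (vdiff n m a u i) (vdiff n m b u i + 1) \<and> eqpos n m (Suc i) (vdiff n m a u (Suc i)) (vdiff n m b u (Suc i) + (- 1))) \<or>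
         (eqpos n m i (vdiff n m a u i) (vdiff n m b u i + (-1)) \<and> eqpos n m (Suc i) (vdiff n m a u (Suc i)) (vdiff n m b u (Suc i) + 1))"
    using dis key[of i 1] key[of "Suc i" "-1"] key[of i "-1"] key[of "Suc i" 1] i
    apply (simp del: add_uminus_conv_diff add: diff_conv_add_uminus) by blast
  show ?thesis unfolding gadj_def
    using vdiff_Z[OF n aY u] vdiff_Z[OF n bY u] i eq2 dis2 by (auto simp: Zvert_def)
qed

lemma cst_vdiff:
  assumes "n \<ge> 1"
  shows "cst n m (vdiff n m v u) k = cst n m (\<lambda>l. v l - u l) (k + (v 0 - u 0) div int n)"
proof -
  have p: "pfx (vdiff n m v u) j = pfx (\<lambda>l. v l - u l) j + ((v 0 - u 0) mod int n - (v 0 - u 0))" if "j \<le> m" for j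
    using that
  proof (induction j)
    case 0 then show ?case by (simp add: vdiff_def is_bucket_def)
  next
    case (Suc j) then show ?case by (simp add: pfx_Suc vdiff_def is_bucket_def)
  qed
  have md: "(v 0 - u 0) mod int n - (v 0 - u 0) = - ((v 0 - u 0) div int n) * int n"
    by (simp add: minus_div_mult_eq_mod[symmetric])
  show ?thesis unfolding cst_def
  proof (rule sum.cong)
    fix j assume "j \<in> {..m}"
    then have "pfx (vdiff n m v u) j = pfx (\<lambda>l. v l - u l) j - ((v 0 - u 0) div int n) * int n"
      using p[of j] md by simp
    then show "\<bar>pfx (vdiff n m v u) j - k * int n\<bar> = \<bar>pfx (\<lambda>l. v l - u l) j - (k + (v 0 - u 0) div int n) * int n\<bar>"
      by (simp add: algebra_simps)
  qed simp
qed

definition fixb :: "nat \<Rightarrow> nat \<Rightarrow> nat \<Rightarrow> int \<Rightarrow> int" where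
  "fixb n m j x = (if is_bucket m j then x mod int n else x)"

definition mv :: "nat \<Rightarrow> nat \<Rightarrow> (nat \<Rightarrow> int) \<Rightarrow> nat \<Rightarrow> int \<Rightarrow> (nat \<Rightarrow> int)" where
  "mv n m v i d = (\<lambda>j. if j = i then fixb n m j (v j - d)
     else if j = Suc i then fixb n m j (v j + d) else v j)"

lemma Yvert_D:
  assumes "v \<in> Yvert n m"
  shows "\<And>j. j > m + 1 \<Longrightarrow> v j = 0" "v 0 \<in> {0..<int n}" "v (m + 1) \<in> {0..<int n}"
      "\<And>j. 1 \<le> j \<Longrightarrow> j \<le> m \<Longrightarrow> v j \<in> {0,1}" "(\<Sum>j\<le>m+1. v j) mod int n = 0"
  using assms by (auto simp: Yvert_def gvert_def)

lemma mv_Y: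
  assumes n: "n \<ge> 1" and v: "v \<in> Yvert n m" and i: "i \<le> m"
    and src: "i = 0 \<or> v i - d \<in> {0,1}" and snk: "i = m \<or> v (Suc i) + d \<in> {0,1}"
  shows "mv n m v i d \<in> Yvert n m"
proof -
  note V = Yvert_D[OF v]
  have np: "int n > 0" using n by simp
  let ?v = "mv n m v i d"
  have a: "\<forall>j. j > m + 1 \<longrightarrow> ?v j = 0" using V(1) i by (simp add: mv_def)
  have b0: "?v 0 \<in> {0..<int n}" using V(2) np by (auto simp: mv_def fixb_def is_bucket_def)
  have b1: "?v (m+1) \<in> {0..<int n}" using V(3) np i by (auto simp: mv_def fixb_def is_bucket_def)
  have c: "\<forall>j. 1 \<le> j \<and> j \<le> m \<longrightarrow> ?v j \<in> {0,1}"
  proof (intro allI impI)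
    fix j assume j: "1 \<le> j \<and> j \<le> m"
    then have nb: "\<not> is_bucket m j" by (simp add: is_bucket_def)
    show "?v j \<in> {0,1}"
    proof (cases "j = i")
      case True then show ?thesis using src j nb by (auto simp: mv_def fixb_def)
    next
      case False
      show ?thesis
      proof (cases "j = Suc i")
        case True then show ?thesis using snk j nb False by (auto simp: mv_def fixb_def)
      next
        case False2: False
        then show ?thesis using V(4)[of j] j False by (simp add: mv_def)
      qed
    qed
  qed
  have "(\<Sum>j\<le>m+1. ?v j) mod int n = (\<Sum>j\<le>m+1. v j + ((if j = i then - d else 0) + (if j = Suc i then d else 0))) mod int n"
    by (rule sum_mod_cong) (auto simp: mv_def fixb_def)
  also have "\<dots> = (\<Sum>j\<le>m+1. v j) mod int n"
    using i by (simp add: sum.distrib)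
  also have "\<dots> = 0" using V(5) .
  finally have d: "(\<Sum>j\<le>m+1. ?v j) mod int n = 0" .
  show ?thesis using a b0 b1 c d by (simp add: Yvert_def gvert_def)
qed

lemma mv_adj:
  assumes n: "n \<ge> 1" and v: "v \<in> Yvert n m" and i: "i \<le> m" and d: "d = 1 \<or> d = -1"
    and src: "i = 0 \<or> v i - d \<in> {0,1}" and snk: "i = m \<or> v (Suc i) + d \<in> {0,1}"
  shows "gadj {0,1} n m v (mv n m v i d)"
proof -
  let ?v = "mv n m v i d"
  have Y: "?v \<in> Yvert n m" by (rule mv_Y[OF n v i src snk])
  have eq: "\<forall>j\<le>m+1. j \<noteq> i \<and> j \<noteq> Suc i \<longrightarrow> v j = ?v j" by (simp add: mv_def)
  have e1: "eqpos n m i (v i) (?v i + d)"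
    by (auto simp: eqpos_def mv_def fixb_def mod_simps)
  have e2: "eqpos n m (Suc i) (v (Suc i)) (?v (Suc i) - d)"
    by (auto simp: eqpos_def mv_def fixb_def mod_simps)
  show ?thesis unfolding gadj_def
    using v Y i eq e1 e2 d by (auto simp: Yvert_def)
qed

lemma mv_cst:
  assumes i: "i \<le> m" and d: "d = 1 \<or> d = -1"
    and pos: "(pfx (\<lambda>l. v l - u l) i - k * int n) * d > 0"
  shows "\<exists>k'. cst n m (\<lambda>l. mv n m v i d l - u l) k' = cst n m (\<lambda>l. v l - u l) k - 1"
proof -
  define c where "c = - ((v 0 - d) div int n)"
  have h0: "mv n m v i d 0 - u 0 = (v 0 - u 0) + (if i = 0 then - d + c * int n else 0)"
    by (auto simp: mv_def fixb_def is_bucket_def c_def minus_div_mult_eq_mod[symmetric] algebra_simps)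
  have hm: "mv n m v i d l - u l = (v l - u l) + (if l = i then - d else if l = Suc i then - (- d) else 0)"
    if "1 \<le> l" "l \<le> m" for l
    using that by (auto simp: mv_def fixb_def is_bucket_def)
  have "\<And>j. j \<le> m \<Longrightarrow> pfx (\<lambda>l. mv n m v i d l - u l) j = pfx (\<lambda>l. v l - u l) j + (if i = 0 then c else 0) * int n + (if j = i then - d else 0)"
    using pfx_diff[of i m "\<lambda>l. mv n m v i d l - u l" "\<lambda>l. v l - u l" "-d" c n, OF i h0 hm] by simp
  from cst_eq[OF this d pos i] show ?thesis by blast
qed

lemma run_up:
  assumes v: "v \<in> Yvert n m" and u: "u \<in> Yvert n m" and d: "d = 1 \<or> d = -1"
  shows "t \<le> m \<Longrightarrow> (pfx (\<lambda>l. v l - u l) t - k * int n) * d > 0 \<Longrightarrow>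
    \<exists>t'\<le>m. (pfx (\<lambda>l. v l - u l) t' - k * int n) * d > 0 \<and> (t' = m \<or> v (Suc t') + d \<in> {0,1})"
proof (induction "m - t" arbitrary: t)
  case 0
  then have "t = m" by simp
  then show ?case using 0 by blast
next
  case (Suc r)
  show ?case
  proof (cases "v (Suc t) + d \<in> {0,1}")
    case True then show ?thesis using Suc.prems by blast
  next
    case False
    have tm: "Suc t \<le> m" using Suc.hyps by simp
    have vs: "v (Suc t) \<in> {0,1}" "u (Suc t) \<in> {0,1}" using Yvert_D(4)[OF v, of "Suc t"] Yvert_D(4)[OF u, of "Suc t"] tm by auto
    have "(pfx (\<lambda>l. v l - u l) (Suc t) - k * int n) * d > 0"
      using Suc.prems(2) vs False d by (auto simp: pfx_Suc algebra_simps mult_less_0_iff zero_less_mult_iff)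
    then show ?thesis using Suc.hyps(1)[of "Suc t"] Suc.hyps(2) tm by auto
  qed
qed

lemma run_down:
  assumes v: "v \<in> Yvert n m" and u: "u \<in> Yvert n m" and d: "d = 1 \<or> d = -1"
  shows "t \<le> m \<Longrightarrow> (pfx (\<lambda>l. v l - u l) t - k * int n) * d > 0 \<Longrightarrow> (t = m \<or> v (Suc t) + d \<in> {0,1}) \<Longrightarrow>
    \<exists>i\<le>m. (pfx (\<lambda>l. v l - u l) i - k * int n) * d > 0 \<and> (i = 0 \<or> v i - d \<in> {0,1}) \<and> (i = m \<or> v (Suc i) + d \<in> {0,1})"
proof (induction t)
  case 0
  then show ?case by blast
next
  case (Suc s)
  show ?case
  proof (cases "v (Suc s) - d \<in> {0,1}")
    case True then show ?thesis using Suc.prems by blast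
  next
    case False
    have vs: "v (Suc s) \<in> {0,1}" "u (Suc s) \<in> {0,1}" using Yvert_D(4)[OF v, of "Suc s"] Yvert_D(4)[OF u, of "Suc s"] Suc.prems(1) by auto
    have "(pfx (\<lambda>l. v l - u l) s - k * int n) * d > 0"
      using Suc.prems(2) vs False d by (auto simp: pfx_Suc algebra_simps mult_less_0_iff zero_less_mult_iff)
    moreover have "v (Suc s) + d \<in> {0,1}" using vs False d by auto
    ultimately show ?thesis using Suc.IH Suc.prems(1) by auto
  qed
qed

lemma zero_cst_eq:
  assumes v: "v \<in> Yvert n m" and u: "u \<in> Yvert n m" and c: "cst n m (\<lambda>l. v l - u l) k = 0"
  shows "v = u"
proof -
  have y0: "\<And>j. j \<le> m \<Longrightarrow> pfx (\<lambda>l. v l - u l) j = k * int n"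
  proof -
    fix j assume j: "j \<le> m"
    have "\<forall>x\<in>{..m}. \<bar>pfx (\<lambda>l. v l - u l) x - k * int n\<bar> = 0"
      using c unfolding cst_def by (subst (asm) sum_nonneg_eq_0_iff) auto
    then show "pfx (\<lambda>l. v l - u l) j = k * int n" using j by auto
  qed
  have "v 0 - u 0 = k * int n" using y0[of 0] by simp
  moreover have "v 0 \<in> {0..<int n}" "u 0 \<in> {0..<int n}" using Yvert_D(2) v u by auto
  ultimately have k0: "k = 0"
  proof -
    assume e: "v 0 - u 0 = k * int n" and r: "v 0 \<in> {0..<int n}" "u 0 \<in> {0..<int n}"
    show "k = 0"
    proof (rule ccontr)
      assume "k \<noteq> 0"
      then have "k \<ge> 1 \<or> k \<le> -1" by auto
      moreover have "int n \<ge> 0" by simp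
      ultimately have "k * int n \<ge> int n \<or> k * int n \<le> - int n"
        by (metis mult_le_cancel_right1 mult_minus_left mult_right_mono mult_1 neg_le_iff_le) 
      then show False using e r by (elim disjE) (simp_all only: atLeastLessThan_iff; linarith)+
    qed
  qed
  have pz: "\<And>j. j \<le> m \<Longrightarrow> pfx (\<lambda>l. v l - u l) j = 0" using y0 k0 by simp
  have mid: "v j = u j" if "j \<le> m" for j
  proof (cases j)
    case 0 then show ?thesis using pz[of 0] by simp
  next
    case (Suc s)
    then show ?thesis using pz[of s] pz[of "Suc s"] that by (simp add: pfx_Suc)
  qed
  have "(\<Sum>j\<le>m+1. v j) = pfx (\<lambda>l. v l - u l) m + (\<Sum>j\<le>m. u j) + v (m+1)"
    by (simp add: pfx_def sum_subtractf)
  moreover have "(\<Sum>j\<le>m+1. u j) = (\<Sum>j\<le>m. u j) + u (m+1)" by simp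
  ultimately have "v (m+1) - u (m+1) = (\<Sum>j\<le>m+1. v j) - (\<Sum>j\<le>m+1. u j)"
    using pz[of m] by linarith
  then have "(v (m+1) - u (m+1)) mod int n = ((\<Sum>j\<le>m+1. v j) mod int n - (\<Sum>j\<le>m+1. u j) mod int n) mod int n"
    by (simp add: mod_diff_eq)
  then have "(v (m+1) - u (m+1)) mod int n = 0"
    using Yvert_D(5)[OF v] Yvert_D(5)[OF u] by simp
  moreover have "v (m+1) \<in> {0..<int n}" "u (m+1) \<in> {0..<int n}" using Yvert_D(3) v u by auto
  ultimately have last: "v (m+1) = u (m+1)"
  proof -
    assume a: "(v (m+1) - u (m+1)) mod int n = 0" and r: "v (m+1) \<in> {0..<int n}" "u (m+1) \<in> {0..<int n}"
    have "v (m+1) mod int n = u (m+1) mod int n" using a by (simp add: mod_eq_dvd_iff dvd_eq_mod_eq_0)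
    moreover have "v (m+1) mod int n = v (m+1)" "u (m+1) mod int n = u (m+1)" using r by auto
    ultimately show ?thesis by simp
  qed
  show ?thesis
  proof (rule ext)
    fix j show "v j = u j"
    proof (cases "j \<le> m")
      case True then show ?thesis by (rule mid)
    next
      case False
      then have "j = m + 1 \<or> j > m + 1" by auto
      then show ?thesis using last Yvert_D(1)[OF v] Yvert_D(1)[OF u] by auto
    qed
  qed
qed

lemma cst_nonneg: "cst n m w k \<ge> 0"
  by (simp add: cst_def sum_nonneg)

lemma ypath:
  assumes n: "n \<ge> 1" and u: "u \<in> Yvert n m"
  shows "\<forall>v k. v \<in> Yvert n m \<longrightarrow> cst n m (\<lambda>l. v l - u l) k = int T \<longrightarrow>
    (\<exists>p len. len \<le> T \<and> p 0 = v \<and> p len = u \<and> (\<forall>i<len. gadj {0,1} n m (p i) (p (Suc i))))"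
proof (induction T rule: less_induct)
  case (less T)
  show ?case
  proof (intro allI impI)
    fix v k assume v: "v \<in> Yvert n m" and c: "cst n m (\<lambda>l. v l - u l) k = int T"
    show "\<exists>p len. len \<le> T \<and> p 0 = v \<and> p len = u \<and> (\<forall>i<len. gadj {0,1} n m (p i) (p (Suc i)))"
    proof (cases "T = 0")
      case True
      then have "v = u" using zero_cst_eq[OF v u] c by simp
      then show ?thesis by (intro exI[of _ "\<lambda>_. u"] exI[of _ 0]) simp
    next
      case False
      let ?y = "\<lambda>j. pfx (\<lambda>l. v l - u l) j - k * int n"
      have "\<exists>i\<le>m. ?y i \<noteq> 0"
      proof (rule ccontr)
        assume "\<not> (\<exists>i\<le>m. ?y i \<noteq> 0)"
        then have "cst n m (\<lambda>l. v l - u l) k = 0" by (simp add: cst_def)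
        then show False using c False by simp
      qed
      then obtain t where t: "t \<le> m" "?y t \<noteq> 0" by blast
      define d :: int where "d = (if ?y t > 0 then 1 else -1)"
      have d: "d = 1 \<or> d = -1" by (simp add: d_def)
      have yt: "?y t * d > 0" using t(2) by (auto simp: d_def mult_less_0_iff zero_less_mult_iff)
      obtain t' where t': "t' \<le> m" "?y t' * d > 0" "t' = m \<or> v (Suc t') + d \<in> {0,1}"
        using run_up[OF v u d t(1) yt] by blast
      obtain i where i: "i \<le> m" "?y i * d > 0" "i = 0 \<or> v i - d \<in> {0,1}" "i = m \<or> v (Suc i) + d \<in> {0,1}"
        using run_down[OF v u d t'(1) t'(2) t'(3)] by blast
      let ?v = "mv n m v i d"
      have adj: "gadj {0,1} n m v ?v" by (rule mv_adj[OF n v i(1) d i(3) i(4)])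
      have vY: "?v \<in> Yvert n m" by (rule mv_Y[OF n v i(1) i(3) i(4)])
      obtain k' where k': "cst n m (\<lambda>l. ?v l - u l) k' = cst n m (\<lambda>l. v l - u l) k - 1"
        using mv_cst[OF i(1) d i(2)] by blast
      then have k'': "cst n m (\<lambda>l. ?v l - u l) k' = int (T - 1)" using c False by simp
      have "T - 1 < T" using False by simp
      from less.IH[OF this, rule_format, OF vY k''] obtain p len where
        p: "len \<le> T - 1" "p 0 = ?v" "p len = u" "\<forall>i<len. gadj {0,1} n m (p i) (p (Suc i))" by blast
      define q where "q = (\<lambda>j. if j = 0 then v else p (j - 1))"
      have "\<forall>j<Suc len. gadj {0,1} n m (q j) (q (Suc j))"
      proof (intro allI impI)
        fix j assume j: "j < Suc len"
        show "gadj {0,1} n m (q j) (q (Suc j))"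
        proof (cases j)
          case 0 then show ?thesis using adj p(2) by (simp add: q_def)
        next
          case (Suc s) then show ?thesis using p(4) j by (simp add: q_def)
        qed
      qed
      moreover have "Suc len \<le> T" using p(1) False by simp
      ultimately show ?thesis using p(3) by (intro exI[of _ q] exI[of _ "Suc len"]) (simp add: q_def)
    qed
  qed
qed

theorem lemma5p21:
  fixes n m :: nat and v u :: "nat \<Rightarrow> int"
  assumes "n \<ge> 1"
    and "v \<in> Yvert n m" and "u \<in> Yvert n m"
  shows "vdiff n m v u \<in> Zvert n m \<and> distY n m v u = distZ n m (vdiff n m v u) zerov"
proof -
  note n = assms(1) and v = assms(2) and u = assms(3)
  let ?w = "vdiff n m v u"
  have wZ: "?w \<in> Zvert n m" by (rule vdiff_Z[OF n v u])
  have zZ: "zerov \<in> Zvert n m" using vdiff_Z[OF n u u] vdiff_self by simp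
  have le1: "distZ n m ?w zerov \<le> distY n m v u"
    unfolding distZ_def distY_def gdist_def
  proof (rule INF_superset_mono)
    show "{k. \<exists>p. p 0 = v \<and> p k = u \<and> v \<in> gvert {0, 1} n m \<and> u \<in> gvert {0, 1} n m \<and>
            (\<forall>i<k. gadj {0, 1} n m (p i) (p (Suc i)))}
      \<subseteq> {k. \<exists>p. p 0 = ?w \<and> p k = zerov \<and> ?w \<in> gvert {-1, 0, 1} n m \<and> zerov \<in> gvert {-1, 0, 1} n m \<and>
            (\<forall>i<k. gadj {-1, 0, 1} n m (p i) (p (Suc i)))}"
    proof
      fix k assume "k \<in> {k. \<exists>p. p 0 = v \<and> p k = u \<and> v \<in> gvert {0, 1} n m \<and> u \<in> gvert {0, 1} n m \<and>
            (\<forall>i<k. gadj {0, 1} n m (p i) (p (Suc i)))}"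
      then obtain p where p: "p 0 = v" "p k = u" "\<forall>i<k. gadj {0, 1} n m (p i) (p (Suc i))" by blast
      let ?q = "\<lambda>i. vdiff n m (p i) u"
      have "\<forall>i<k. gadj {-1, 0, 1} n m (?q i) (?q (Suc i))"
        using vdiff_adj[OF n _ u] p(3) by blast
      moreover have "?q 0 = ?w" "?q k = zerov" using p(1,2) vdiff_self by simp_all
      ultimately show "k \<in> {k. \<exists>p. p 0 = ?w \<and> p k = zerov \<and> ?w \<in> gvert {-1, 0, 1} n m \<and> zerov \<in> gvert {-1, 0, 1} n m \<and>
            (\<forall>i<k. gadj {-1, 0, 1} n m (p i) (p (Suc i)))}"
        using wZ zZ unfolding Zvert_def by (intro CollectI exI[of _ ?q]) blast
    qed
  qed simp
  have le2: "distY n m v u \<le> distZ n m ?w zerov"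
    unfolding distZ_def distY_def gdist_def
  proof (rule INF_greatest)
    fix k assume "k \<in> {k. \<exists>p. p 0 = ?w \<and> p k = zerov \<and> ?w \<in> gvert {-1, 0, 1} n m \<and> zerov \<in> gvert {-1, 0, 1} n m \<and>
            (\<forall>i<k. gadj {-1, 0, 1} n m (p i) (p (Suc i)))}"
    then obtain p where p: "p 0 = ?w" "p k = zerov" "\<forall>i<k. gadj {-1, 0, 1} n m (p i) (p (Suc i))" by blast
    obtain k0 where k0: "cst n m ?w k0 \<le> int k" using zpath[of ?w k "{-1,0,1}" n m] p by blast
    define k1 where "k1 = k0 + (v 0 - u 0) div int n"
    have c1: "cst n m (\<lambda>l. v l - u l) k1 \<le> int k" using k0 cst_vdiff[OF n, of m v u k0] by (simp add: k1_def)
    define T where "T = nat (cst n m (\<lambda>l. v l - u l) k1)"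
    have cT: "cst n m (\<lambda>l. v l - u l) k1 = int T" using cst_nonneg by (simp add: T_def)
    have Tk: "T \<le> k" using c1 cT by simp
    obtain q len where q: "len \<le> T" "q 0 = v" "q len = u" "\<forall>i<len. gadj {0,1} n m (q i) (q (Suc i))"
      using ypath[OF n u, rule_format, OF v cT] by blast
    have "len \<in> {k. \<exists>p. p 0 = v \<and> p k = u \<and> v \<in> gvert {0, 1} n m \<and> u \<in> gvert {0, 1} n m \<and>
            (\<forall>i<k. gadj {0, 1} n m (p i) (p (Suc i)))}"
      using q v u unfolding Yvert_def by blast
    then have "(INF k\<in>{k. \<exists>p. p 0 = v \<and> p k = u \<and> v \<in> gvert {0, 1} n m \<and> u \<in> gvert {0, 1} n m \<and>
            (\<forall>i<k. gadj {0, 1} n m (p i) (p (Suc i)))}. enat k) \<le> enat len"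
      by (rule INF_lower)
    also have "\<dots> \<le> enat k" using q(1) Tk by simp
    finally show "(INF k\<in>{k. \<exists>p. p 0 = v \<and> p k = u \<and> v \<in> gvert {0, 1} n m \<and> u \<in> gvert {0, 1} n m \<and>
            (\<forall>i<k. gadj {0, 1} n m (p i) (p (Suc i)))}. enat k) \<le> enat k" .
  qed
  show ?thesis using wZ le1 le2 by simp
qed

end
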